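(* Let $T$ be a tree in which every non-leaf vertex has degree 3, and let $S_{in}\uplus S_{out}$ be a partition of the set of leaves of $T$. If $|S_{out}|$ is odd, then $T$ has an independent set $S$ with $S_{in}\subseteq S$ and $S\cap S_{out}=\emptyset$ such that each component of $T-S$ contains at most one leaf of $T$.
   Context: A leaf of $T$ is a vertex of degree at most 1 in $T$ (so a one-vertex tree has its vertex as a leaf). *)

theory Defs
  imports Main
begin

definition simple_graph :: "'a set \<Rightarrow> ('a \<Rightarrow> 'a \<Rightarrow> bool) \<Rightarrow> bool" where
  "simple_graph V E \<longleftrightarrow> finite V \<and> (\<forall>u v. E u v \<longrightarrow> u \<in> V \<and> v \<in> V)
     \<and> (\<forall>u v. E u v \<longrightarrow> E v u) \<and> (\<forall>u. \<not> E u u)"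

definition walk_in :: "'a set \<Rightarrow> ('a \<Rightarrow> 'a \<Rightarrow> bool) \<Rightarrow> 'a list \<Rightarrow> bool" where
  "walk_in W E xs \<longleftrightarrow> xs \<noteq> [] \<and> set xs \<subseteq> W \<and> (\<forall>i. Suc i < length xs \<longrightarrow> E (xs ! i) (xs ! Suc i))"

definition connected_in :: "'a set \<Rightarrow> ('a \<Rightarrow> 'a \<Rightarrow> bool) \<Rightarrow> 'a \<Rightarrow> 'a \<Rightarrow> bool" where
  "connected_in W E u v \<longleftrightarrow> (\<exists>xs. walk_in W E xs \<and> hd xs = u \<and> last xs = v)"

definition is_cycle :: "'a set \<Rightarrow> ('a \<Rightarrow> 'a \<Rightarrow> bool) \<Rightarrow> 'a list \<Rightarrow> bool" where
  "is_cycle V E xs \<longleftrightarrow> walk_in V E xs \<and> distinct xs \<and> length xs \<ge> 3 \<and> E (last xs) (hd xs)"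

definition is_tree :: "'a set \<Rightarrow> ('a \<Rightarrow> 'a \<Rightarrow> bool) \<Rightarrow> bool" where
  "is_tree V E \<longleftrightarrow> simple_graph V E \<and> V \<noteq> {} \<and> (\<forall>u\<in>V. \<forall>v\<in>V. connected_in V E u v)
     \<and> (\<nexists>xs. is_cycle V E xs)"

definition degree :: "'a set \<Rightarrow> ('a \<Rightarrow> 'a \<Rightarrow> bool) \<Rightarrow> 'a \<Rightarrow> nat" where
  "degree V E v = card {u \<in> V. E v u}"

definition leaves :: "'a set \<Rightarrow> ('a \<Rightarrow> 'a \<Rightarrow> bool) \<Rightarrow> 'a set" where
  "leaves V E = {v \<in> V. degree V E v \<le> 1}"

definition independent_set :: "'a set \<Rightarrow> ('a \<Rightarrow> 'a \<Rightarrow> bool) \<Rightarrow> 'a set \<Rightarrow> bool" where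
  "independent_set V E S \<longleftrightarrow> S \<subseteq> V \<and> (\<forall>u\<in>S. \<forall>v\<in>S. \<not> E u v)"

end

theory Submission
  imports Defs
begin

lemma walk_Nil[simp]: "\<not> walk_in W E []"
  by (simp add: walk_in_def)

lemma walk_single[simp]: "walk_in W E [x] \<longleftrightarrow> x \<in> W"
  by (simp add: walk_in_def)

lemma walk_Cons2[simp]: "walk_in W E (x # y # xs) \<longleftrightarrow> x \<in> W \<and> E x y \<and> walk_in W E (y # xs)"
proof -
  have "(\<forall>i. Suc i < length (x#y#xs) \<longrightarrow> E ((x#y#xs) ! i) ((x#y#xs) ! Suc i)) \<longleftrightarrow>
        E x y \<and> (\<forall>j. Suc j < length (y#xs) \<longrightarrow> E ((y#xs) ! j) ((y#xs) ! Suc j))"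
    (is "?L \<longleftrightarrow> ?R")
  proof
    assume L: ?L
    show ?R
    proof
      show "E x y" using L[rule_format, of 0] by simp
      show "\<forall>j. Suc j < length (y#xs) \<longrightarrow> E ((y#xs) ! j) ((y#xs) ! Suc j)"
        using L by (metis Suc_less_eq length_Cons nth_Cons_Suc)
    qed
  next
    assume R: ?R
    show ?L
    proof (intro allI impI)
      fix i assume "Suc i < length (x#y#xs)"
      then show "E ((x#y#xs) ! i) ((x#y#xs) ! Suc i)"
        using R by (cases i) auto
    qed
  qed
  then show ?thesis by (auto simp add: walk_in_def)
qed

lemma walk_hd: "walk_in W E (x # xs) \<Longrightarrow> x \<in> W"
  by (simp add: walk_in_def)

lemma walk_set: "walk_in W E xs \<Longrightarrow> set xs \<subseteq> W"
  by (simp add: walk_in_def)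

lemma walk_mono: "walk_in W E xs \<Longrightarrow> set xs \<subseteq> W' \<Longrightarrow> walk_in W' E xs"
  by (simp add: walk_in_def)

lemma walk_append_iff:
  "walk_in W E (xs @ y # ys) \<longleftrightarrow> walk_in W E (xs @ [y]) \<and> walk_in W E (y # ys)"
proof (induction xs)
  case Nil
  then show ?case using walk_hd by fastforce
next
  case (Cons a xs)
  then show ?case by (cases xs) auto
qed

lemma walk_rev:
  assumes "\<And>a b. E a b \<Longrightarrow> E b a"
  shows "walk_in W E xs \<Longrightarrow> walk_in W E (rev xs)"
proof (induction xs)
  case Nil then show ?case by simp
next
  case (Cons a xs)
  note IH = Cons.IH and P = Cons.prems
  show ?case
  proof (cases xs)
    case Nil then show ?thesis using P by simp
  next
    case (Cons b xs')
    have e: "rev (a # xs) = rev xs' @ b # [a]" using Cons by simp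
    have "walk_in W E xs" using P Cons by simp
    then have "walk_in W E (rev xs' @ [b])" using IH Cons by simp
    moreover have "walk_in W E [b, a]"
      using Cons P assms walk_hd by fastforce
    ultimately show ?thesis unfolding e using walk_append_iff[of W E "rev xs'" b "[a]"] by simp
  qed
qed

lemma walk_join:
  assumes "walk_in W E xs" "walk_in W E ys" "last xs = hd ys"
  shows "walk_in W E (xs @ tl ys)"
proof -
  obtain y ys' where ys: "ys = y # ys'" using assms(2) by (cases ys) auto
  obtain zs z where xs: "xs = zs @ [z]" using assms(1) by (cases xs rule: rev_exhaust) auto
  have z: "z = y" using assms(3) xs ys by simp
  have "walk_in W E (zs @ y # ys')" using assms(1,2) xs ys z walk_append_iff[of W E zs y ys'] by simp
  then show ?thesis using xs ys z by simp
qed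

lemma conn_refl: "x \<in> W \<Longrightarrow> connected_in W E x x"
  unfolding connected_in_def by (rule exI[of _ "[x]"]) simp

lemma conn_sym: "(\<And>a b. E a b \<Longrightarrow> E b a) \<Longrightarrow> connected_in W E u v \<Longrightarrow> connected_in W E v u"
  unfolding connected_in_def
  by (metis walk_rev hd_rev last_rev)

lemma conn_trans: "connected_in W E u v \<Longrightarrow> connected_in W E v w \<Longrightarrow> connected_in W E u w"
  unfolding connected_in_def
proof (elim exE conjE)
  fix xs ys assume a: "walk_in W E xs" "hd xs = u" "last xs = v" "walk_in W E ys" "hd ys = v" "last ys = w"
  have "walk_in W E (xs @ tl ys)" using walk_join a by metis
  moreover have "hd (xs @ tl ys) = u" using a by (cases xs) auto
  moreover have "last (xs @ tl ys) = w" using a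
    by (cases ys; cases "tl ys") auto
  ultimately show "\<exists>xs. walk_in W E xs \<and> hd xs = u \<and> last xs = w" by blast
qed

lemma conn_in: "connected_in W E u v \<Longrightarrow> u \<in> W \<and> v \<in> W"
  unfolding connected_in_def
  by (metis hd_in_set last_in_set subsetD walk_Nil walk_set)

lemma dpath_walk: "walk_in W E xs \<Longrightarrow> \<exists>p. walk_in W E p \<and> distinct p \<and> hd p = hd xs \<and> last p = last xs"
proof (induction "length xs" arbitrary: xs rule: less_induct)
  case less
  show ?case
  proof (cases "distinct xs")
    case True then show ?thesis using less.prems by blast
  next
    case False
    then obtain as x bs cs where xs: "xs = as @ [x] @ bs @ [x] @ cs"
      using not_distinct_decomp by blast
    let ?ys = "as @ x # cs"
    have x1: "xs = as @ x # (bs @ x # cs)" using xs by simp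
    have x2: "xs = (as @ x # bs) @ x # cs" using xs by simp
    have w1: "walk_in W E (as @ [x])" using less.prems walk_append_iff[of W E as x "bs @ x # cs"] x1 by simp
    have w2: "walk_in W E (x # cs)" using less.prems walk_append_iff[of W E "as @ x # bs" x cs] x2 by simp
    have "walk_in W E ?ys" using w1 w2 walk_append_iff[of W E as x cs] by simp
    moreover have "length ?ys < length xs" using xs by simp
    moreover have "hd ?ys = hd xs" using xs by (cases as) auto
    moreover have "last ?ys = last xs" using xs by simp
    ultimately show ?thesis using less.hyps[of ?ys] by auto
  qed
qed

lemma dpath: "connected_in W E u v \<Longrightarrow> \<exists>p. walk_in W E p \<and> distinct p \<and> hd p = u \<and> last p = v"
  unfolding connected_in_def using dpath_walk by metis

locale tr =
  fixes V :: "'a set" and E :: "'a \<Rightarrow> 'a \<Rightarrow> bool"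
  assumes tree: "is_tree V E"
begin

lemma fin: "finite V" using tree unfolding is_tree_def simple_graph_def by blast
lemma symE: "E u v \<Longrightarrow> E v u" using tree unfolding is_tree_def simple_graph_def by blast
lemma irr: "\<not> E u u" using tree unfolding is_tree_def simple_graph_def by blast
lemma inV1: "E u v \<Longrightarrow> u \<in> V" using tree unfolding is_tree_def simple_graph_def by blast
lemma inV2: "E u v \<Longrightarrow> v \<in> V" using tree unfolding is_tree_def simple_graph_def by blast
lemma conn: "u \<in> V \<Longrightarrow> v \<in> V \<Longrightarrow> connected_in V E u v" using tree unfolding is_tree_def by blast
lemma nocyc: "\<not> is_cycle V E xs" using tree unfolding is_tree_def by blast

lemma walk_conn: "walk_in W E xs \<Longrightarrow> connected_in W E (hd xs) (last xs)"
  unfolding connected_in_def by blast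

lemma csym: "connected_in W E u v \<Longrightarrow> connected_in W E v u"
  using conn_sym[of E W u v] symE by blast

lemma no_path_cycle:
  assumes "walk_in V E r" "distinct r" "hd r = a" "last r = b" "a \<noteq> b" "v \<notin> set r"
    "v \<in> V" "E v a" "E b v"
  shows False
proof -
  obtain r' where r: "r = a # r'" using assms(1,3) by (cases r) auto
  have "r' \<noteq> []" using r assms(4,5) by auto
  then have "length (v # r) \<ge> 3" using r by (cases r') auto
  moreover have "walk_in V E (v # r)" using r assms(1,7,8) by simp
  moreover have "distinct (v # r)" using assms(2,6) by simp
  moreover have "E (last (v # r)) (hd (v # r))" using assms(4,9) r by simp
  ultimately have "is_cycle V E (v # r)" unfolding is_cycle_def by simp
  then show False using nocyc by blast
qed

definition side where "side u v = {x. connected_in (V - {v}) E u x}"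

lemma side_sub: "side u v \<subseteq> V - {v}"
  unfolding side_def using conn_in by fastforce

lemma neighbor_side:
  assumes "E v a" "E v b" "a \<noteq> b"
  shows "side a v \<inter> side b v = {}"
proof (rule ccontr)
  assume "side a v \<inter> side b v \<noteq> {}"
  then obtain x where x1: "connected_in (V - {v}) E a x" and x2: "connected_in (V - {v}) E b x"
    unfolding side_def by blast
  have c: "connected_in (V - {v}) E a b" using conn_trans[OF x1 csym[OF x2]] .
  obtain r where r: "walk_in (V - {v}) E r" "distinct r" "hd r = a" "last r = b"
    using dpath[OF c] by blast
  have "v \<notin> set r" using walk_set[OF r(1)] by blast
  moreover have "walk_in V E r" using walk_set[OF r(1)] by (intro walk_mono[OF r(1)]) blast
  ultimately show False using no_path_cycle[of r a b v, OF _ r(2,3,4) assms(3) _ inV1[OF assms(1)] assms(1) symE[OF assms(2)]] by blast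
qed

lemma side_cover:
  assumes "v \<in> V" "x \<in> V" "x \<noteq> v"
  shows "\<exists>y. E v y \<and> x \<in> side y v"
proof -
  obtain p where p: "walk_in V E p" "distinct p" "hd p = v" "last p = x"
    using dpath[OF conn[OF assms(1,2)]] by blast
  obtain p' where p1: "p = v # p'" using p by (cases p) auto
  obtain y p'' where p2: "p' = y # p''" using p p1 assms(3) by (cases p') auto
  have "E v y" using p(1) p1 p2 by simp
  moreover have "walk_in V E (y # p'')" using p(1) p1 p2 by simp
  moreover have "set (y # p'') \<subseteq> V - {v}" using p(2) p1 p2 walk_set[OF p(1)] by auto
  ultimately have "walk_in (V - {v}) E (y # p'')" using walk_mono[of V E "y # p''"] by blast
  moreover have "last (y # p'') = x" using p(4) p1 p2 by simp
  ultimately have "x \<in> side y v" unfolding side_def using walk_conn[of "V - {v}" "y # p''"] by simp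
  then show ?thesis using \<open>E v y\<close> by blast
qed

lemma edge_disj:
  assumes "E u v"
  shows "side u v \<inter> side v u = {}"
proof (rule ccontr)
  assume "side u v \<inter> side v u \<noteq> {}"
  then obtain x where x1: "connected_in (V - {v}) E u x" and x2: "connected_in (V - {u}) E v x"
    unfolding side_def by blast
  have "x \<noteq> v" using conn_in[OF x1] by blast
  obtain q where q: "walk_in (V - {u}) E q" "distinct q" "hd q = v" "last q = x"
    using dpath[OF x2] by blast
  obtain q' where q1: "q = v # q'" using q by (cases q) auto
  obtain y q'' where q2: "q' = y # q''" using q q1 \<open>x \<noteq> v\<close> by (cases q') auto
  have Evy: "E v y" using q(1) q1 q2 by simp
  have yu: "y \<noteq> u" using walk_set[OF q(1)] q1 q2 by auto
  have "walk_in V E (y # q'')" using q(1) q1 q2 walk_mono[of "V - {u}" E "y # q''" V] walk_set[of "V - {u}" E "y # q''"] by auto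
  moreover have "set (y # q'') \<subseteq> V - {v}" using q(2) q1 q2 walk_set[OF q(1)] by auto
  ultimately have "walk_in (V - {v}) E (y # q'')" using walk_mono[of V E "y # q''"] by blast
  then have "connected_in (V - {v}) E y x" using walk_conn[of "V - {v}" "y # q''"] q(4) q1 q2 by simp
  then have c: "connected_in (V - {v}) E u y" using conn_trans[OF x1 csym] by blast
  obtain r where r: "walk_in (V - {v}) E r" "distinct r" "hd r = u" "last r = y"
    using dpath[OF c] by blast
  have "v \<notin> set r" using walk_set[OF r(1)] by blast
  moreover have "walk_in V E r" using walk_set[OF r(1)] by (intro walk_mono[OF r(1)]) blast
  ultimately show False using no_path_cycle[of r u y v, OF _ r(2,3,4) not_sym[OF yu] _ inV2[OF assms] symE[OF assms] symE[OF Evy]] by blast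
qed

lemma edge_cover:
  assumes "E u v"
  shows "side u v \<union> side v u = V"
proof
  show "side u v \<union> side v u \<subseteq> V" using side_sub by blast
next
  show "V \<subseteq> side u v \<union> side v u"
  proof
    fix x assume xV: "x \<in> V"
    have uv: "u \<noteq> v" using assms irr[of u] by auto
    show "x \<in> side u v \<union> side v u"
    proof (cases "x = v")
      case True
      then have "v \<in> side v u" unfolding side_def using conn_refl[of v "V - {u}" E] uv xV by simp
      then show ?thesis using True by (simp only: UnI2)
    next
      case False
      obtain p where p: "walk_in V E p" "distinct p" "hd p = v" "last p = x"
        using dpath[OF conn[OF inV2[OF assms] xV]] by blast
      show ?thesis
      proof (cases "u \<in> set p")
        case True
        then obtain ys zs where pe: "p = ys @ u # zs" by (meson split_list)
        have w: "walk_in V E (u # zs)" using p(1) pe walk_append_iff[of V E ys u zs] by simp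
        have "ys \<noteq> []" using pe p(3) uv by auto
        then have "v \<in> set ys" using pe p(3) by (cases ys) auto
        moreover have d: "distinct (ys @ u # zs)" using p(2) pe by simp
        ultimately have vn: "v \<notin> set (u # zs)" by (simp add: distinct_append) blast
        have "set (u # zs) \<subseteq> V - {v}" using walk_set[OF w] vn by blast
        then have "walk_in (V - {v}) E (u # zs)" by (rule walk_mono[OF w])
        moreover have "last (u # zs) = x" using p(4) pe by simp
        ultimately have "x \<in> side u v" unfolding side_def using walk_conn[of "V - {v}" "u # zs"] by simp
        then show ?thesis by (rule UnI1)
      next
        case False
        then have "set p \<subseteq> V - {u}" using walk_set[OF p(1)] by blast
        then have "walk_in (V - {u}) E p" by (rule walk_mono[OF p(1)])
        then have "x \<in> side v u" unfolding side_def using walk_conn[of "V - {u}" p] p by simp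
        then show ?thesis by (rule UnI2)
      qed
    qed
  qed
qed

lemma leaf_side:
  assumes "u \<in> leaves V E" "E u y"
  shows "side u y = {u}"
proof
  have "u \<noteq> y" using assms irr[of u] by auto
  then show "{u} \<subseteq> side u y" unfolding side_def using conn_refl[of u "V - {y}" E] inV1 assms by simp
next
  show "side u y \<subseteq> {u}"
  proof
    fix x assume "x \<in> side u y"
    then have c: "connected_in (V - {y}) E u x" unfolding side_def by simp
    obtain p where p: "walk_in (V - {y}) E p" "distinct p" "hd p = u" "last p = x"
      using dpath[OF c] by blast
    obtain p' where p1: "p = u # p'" using p by (cases p) auto
    show "x \<in> {u}"
    proof (cases p')
      case Nil then show ?thesis using p p1 by simp
    next
      case (Cons z p'')
      have "E u z" using p(1) p1 Cons by simp
      have "z \<in> V - {y}" using walk_hd[of "V - {y}" E z p''] p(1) p1 Cons by simp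
      then have "z \<noteq> y" by blast
      then have "{y, z} \<subseteq> {w \<in> V. E u w}" using assms inV2 \<open>E u z\<close> by auto
      then have "card {y, z} \<le> card {w \<in> V. E u w}" using fin by (simp add: card_mono)
      moreover have "card {y, z} = 2" using \<open>z \<noteq> y\<close> by simp
      moreover have "card {w \<in> V. E u w} \<le> 1" using assms(1) unfolding leaves_def degree_def by simp
      ultimately show ?thesis by simp
    qed
  qed
qed

lemma edge_sum:
  assumes "E u v" "Q \<subseteq> V"
  shows "card (Q \<inter> side u v) + card (Q \<inter> side v u) = card Q"
proof -
  have "Q = (Q \<inter> side u v) \<union> (Q \<inter> side v u)" using edge_cover[OF assms(1)] assms(2) by blast
  moreover have "(Q \<inter> side u v) \<inter> (Q \<inter> side v u) = {}" using edge_disj[OF assms(1)] by blast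
  moreover have "finite Q" using fin assms(2) finite_subset by blast
  ultimately show ?thesis using card_Un_disjoint[of "Q \<inter> side u v" "Q \<inter> side v u"] by simp
qed

lemma vertex_sum:
  assumes "v \<in> V" "v \<notin> Q" "Q \<subseteq> V"
  shows "(\<Sum>y\<in>{y \<in> V. E v y}. card (Q \<inter> side y v)) = card Q"
proof -
  have finO: "finite Q" using fin assms(3) finite_subset by blast
  have "Q = (\<Union>y\<in>{y \<in> V. E v y}. Q \<inter> side y v)"
  proof
    show "Q \<subseteq> (\<Union>y\<in>{y \<in> V. E v y}. Q \<inter> side y v)"
    proof
      fix x assume "x \<in> Q"
      then obtain y where "E v y" "x \<in> side y v" using side_cover[OF assms(1)] assms by blast
      then show "x \<in> (\<Union>y\<in>{y \<in> V. E v y}. Q \<inter> side y v)" using \<open>x \<in> Q\<close> inV2 by blast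
    qed
  qed blast
  moreover have "card (\<Union>y\<in>{y \<in> V. E v y}. Q \<inter> side y v) = (\<Sum>y\<in>{y \<in> V. E v y}. card (Q \<inter> side y v))"
  proof (rule card_UN_disjoint)
    show "finite {y \<in> V. E v y}" using fin by simp
    show "\<forall>i\<in>{y \<in> V. E v y}. finite (Q \<inter> side i v)" using finO by simp
    show "\<forall>i\<in>{y \<in> V. E v y}. \<forall>j\<in>{y \<in> V. E v y}. i \<noteq> j \<longrightarrow> Q \<inter> side i v \<inter> (Q \<inter> side j v) = {}"
      using neighbor_side by blast
  qed
  ultimately show ?thesis by simp
qed

end

lemma walk_last_edge: "walk_in W E xs \<Longrightarrow> length xs \<ge> 2 \<Longrightarrow> E (last (butlast xs)) (last xs)"
proof (induction xs)
  case Nil then show ?case by simp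
next
  case (Cons a xs)
  then obtain b xs' where xs: "xs = b # xs'" by (cases xs) auto
  show ?case
  proof (cases xs')
    case Nil then show ?thesis using Cons.prems xs by simp
  next
    case (Cons c xs'')
    have "walk_in W E xs" using Cons.prems(1) xs by simp
    moreover have "length xs \<ge> 2" using xs Cons by simp
    ultimately have "E (last (butlast xs)) (last xs)" using Cons.IH by blast
    then show ?thesis using xs Cons by simp
  qed
qed

theorem lemma4p32:
  fixes V :: "'a set" and E :: "'a \<Rightarrow> 'a \<Rightarrow> bool" and S_in S_out :: "'a set"
  assumes tree: "is_tree V E"
    and cubic: "\<forall>v\<in>V. v \<notin> leaves V E \<longrightarrow> degree V E v = 3"
    and part: "S_in \<union> S_out = leaves V E" "S_in \<inter> S_out = {}"
    and odd: "odd (card S_out)"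
  shows "\<exists>S. independent_set V E S \<and> S_in \<subseteq> S \<and> S \<inter> S_out = {} \<and>
           (\<forall>u\<in>leaves V E. \<forall>w\<in>leaves V E. u \<notin> S \<and> w \<notin> S \<and> connected_in (V - S) E u w \<longrightarrow> u = w)"
proof -
  interpret tr V E using tree by (simp add: tr_def)
  have LV: "leaves V E \<subseteq> V" unfolding leaves_def by blast
  have QV: "S_out \<subseteq> V" using part(1) LV by blast
  define cnt where "cnt u v = card (S_out \<inter> side u v)" for u v
  define S where "S = S_in \<union> {v \<in> V. v \<notin> leaves V E \<and> (\<forall>y. E v y \<longrightarrow> odd (cnt y v))}"
  have esum: "cnt u v + cnt v u = card S_out" if "E u v" for u v
    unfolding cnt_def using edge_sum[OF that QV] .
  have cnt_out: "cnt u y = 1" if "u \<in> S_out" "E u y" for u y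
  proof -
    have "u \<in> leaves V E" using that part(1) by blast
    then have "side u y = {u}" using leaf_side that(2) by blast
    then show ?thesis unfolding cnt_def using that(1) by simp
  qed
  have cnt_in: "cnt u y = 0" if "u \<in> S_in" "E u y" for u y
  proof -
    have "u \<in> leaves V E" using that part(1) by blast
    then have "side u y = {u}" using leaf_side that(2) by blast
    moreover have "u \<notin> S_out" using that(1) part(2) by blast
    ultimately show ?thesis unfolding cnt_def by simp
  qed
  have SV: "S \<subseteq> V" unfolding S_def using part(1) LV by blast
  have indep: False if "u \<in> S" "w \<in> S" "E u w" for u w
  proof -
    have hu: "u \<in> S_in \<or> (\<forall>y. E u y \<longrightarrow> odd (cnt y u))" using that(1) unfolding S_def by blast
    have hw: "w \<in> S_in \<or> (\<forall>y. E w y \<longrightarrow> odd (cnt y w))" using that(2) unfolding S_def by blast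
    consider (a) "u \<in> S_in" "w \<in> S_in"
      | (b) "u \<in> S_in" "w \<notin> S_in" "\<forall>y. E w y \<longrightarrow> odd (cnt y w)"
      | (c) "u \<notin> S_in" "w \<in> S_in" "\<forall>y. E u y \<longrightarrow> odd (cnt y u)"
      | (d) "\<forall>y. E w y \<longrightarrow> odd (cnt y w)" "\<forall>y. E u y \<longrightarrow> odd (cnt y u)"
      using hu hw by blast
    then show False
    proof cases
      case a
      have "u \<in> leaves V E" "w \<in> leaves V E" using a part(1) by blast+
      then have "side u w = {u}" "side w u = {w}" using leaf_side that(3) symE by blast+
      then have "V = {u, w}" using edge_cover[OF that(3)] by auto
      then have "S_out = {}" using QV a part(2) by blast
      then show False using odd by simp
    next
      case b
      then have "odd (cnt u w)" using symE[OF that(3)] by blast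
      then show False using cnt_in[OF b(1) that(3)] by simp
    next
      case c
      then have "odd (cnt w u)" using that(3) by blast
      then show False using cnt_in[OF c(2) symE[OF that(3)]] by simp
    next
      case d
      then have "odd (cnt w u)" "odd (cnt u w)" using that(3) symE[OF that(3)] by blast+
      then show False using esum[OF that(3)] odd by presburger
    qed
  qed
  have step: "odd (cnt b c)"
    if "b \<in> V" "b \<notin> S" "E b a" "E b c" "a \<noteq> c" "odd (cnt a b)" for a b c
  proof (rule ccontr)
    assume ev: "\<not> odd (cnt b c)"
    let ?N = "{y \<in> V. E b y}"
    have finN: "finite ?N" using fin by simp
    have acN: "{a, c} \<subseteq> ?N" using that inV2 by blast
    then have "card {a, c} \<le> card ?N" using finN card_mono by blast
    then have "card ?N \<ge> 2" using that(5) by simp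
    then have nl: "b \<notin> leaves V E" unfolding leaves_def degree_def by simp
    then have c3: "card ?N = 3" using cubic that(1) unfolding degree_def by blast
    have "card (?N - {a, c}) = 1" using c3 acN finN that(5) by (simp add: card_Diff_subset)
    then obtain z where z: "?N - {a, c} = {z}" using card_1_singletonE by blast
    then have Nz: "?N = {a, c, z}" and za: "z \<noteq> a" and zc: "z \<noteq> c" using acN by blast+
    have bQ: "b \<notin> S_out" using nl part(1) by blast
    have "(\<Sum>y\<in>?N. cnt y b) = card S_out" unfolding cnt_def using vertex_sum[OF that(1) bQ QV] .
    then have sum3: "cnt a b + cnt c b + cnt z b = card S_out" using Nz za zc that(5) by simp
    have "cnt b c + cnt c b = card S_out" using esum that(4) by blast
    then have oc: "odd (cnt c b)" using ev odd by presburger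
    have oz: "odd (cnt z b)" using sum3 oc that(6) odd by presburger
    have "\<forall>y. E b y \<longrightarrow> odd (cnt y b)"
    proof (intro allI impI)
      fix y assume "E b y"
      then have "y \<in> {a, c, z}" using Nz inV2 by blast
      then show "odd (cnt y b)" using oc oz that(6) by blast
    qed
    then have "b \<in> S" unfolding S_def using that(1) nl by blast
    then show False using that(2) by blast
  qed
  have pathl: "walk_in (V - S) E (a # b # p) \<Longrightarrow> distinct (a # b # p) \<Longrightarrow> odd (cnt a b) \<Longrightarrow>
      odd (cnt (last (butlast (a # b # p))) (last (a # b # p)))" for p a b
  proof (induction p arbitrary: a b)
    case Nil then show ?case by simp
  next
    case (Cons c p)
    have bV: "b \<in> V" "b \<notin> S" using Cons.prems(1) walk_hd by auto
    have Eab: "E a b" "E b c" using Cons.prems(1) by auto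
    have "a \<noteq> c" using Cons.prems(2) by auto
    then have "odd (cnt b c)" using step[OF bV symE[OF Eab(1)] Eab(2)] Cons.prems(3) by blast
    moreover have "walk_in (V - S) E (b # c # p)" using Cons.prems(1) by simp
    moreover have "distinct (b # c # p)" using Cons.prems(2) by simp
    ultimately have "odd (cnt (last (butlast (b # c # p))) (last (b # c # p)))" using Cons.IH by blast
    then show ?case by simp
  qed
  have sep: "u = w" if H: "u \<in> leaves V E" "w \<in> leaves V E" "u \<notin> S" "w \<notin> S"
      "connected_in (V - S) E u w" for u w
  proof (rule ccontr)
    assume uw: "u \<noteq> w"
    have uo: "u \<in> S_out" "w \<in> S_out" using H part(1) unfolding S_def by blast+
    obtain p where p: "walk_in (V - S) E p" "distinct p" "hd p = u" "last p = w"
      using dpath[OF H(5)] by blast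
    obtain p' where p1: "p = u # p'" using p by (cases p) auto
    obtain b p'' where p2: "p' = b # p''" using p p1 uw by (cases p') auto
    have Eub: "E u b" using p(1) p1 p2 by simp
    have "odd (cnt u b)" using cnt_out[OF uo(1) Eub] by simp
    then have o1: "odd (cnt (last (butlast p)) w)" using pathl[of u b p''] p p1 p2 by simp
    have "E (last (butlast p)) w" using walk_last_edge[OF p(1)] p(4) p1 p2 by simp
    then have "cnt (last (butlast p)) w + cnt w (last (butlast p)) = card S_out"
      and "cnt w (last (butlast p)) = 1" using esum cnt_out[OF uo(2)] symE by blast+
    then show False using o1 odd by presburger
  qed
  show ?thesis
  proof (intro exI conjI)
    show "independent_set V E S" unfolding independent_set_def using SV indep by blast
    show "S_in \<subseteq> S" unfolding S_def by blast
    show "S \<inter> S_out = {}" unfolding S_def using part by blast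
    show "\<forall>u\<in>leaves V E. \<forall>w\<in>leaves V E. u \<notin> S \<and> w \<notin> S \<and> connected_in (V - S) E u w \<longrightarrow> u = w"
      using sep by blast
  qed
qed

end
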